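(* Let $(Y,S,\gamma)$ be a deterministic machine, i.e. there is a measurable function $f\colon Y\times S\to Y$ with $\gamma(\cdot\mid y,s)=\delta_{f(y,s)}$ for all $y\in Y$, $s\in S$. Let $H$ be a standard Borel space and let $\psi_H\colon Y\to P(H)$ and $\kappa\colon H\to P(H\times S)$ be arbitrary Markov kernels. Then $(H,\psi_H,\kappa)$ is a consistent Bayesian filtering interpretation of $\gamma$ if and only if for every $y\in Y$ and all measurable $C\subseteq H$, $A\subseteq S$, $$\psi_{S,H'}(C\times A\mid y)=\int_A \psi_H\big(C\mid f(y,s)\big)\,\psi_S(ds\mid y).$$
   Context: All measurable spaces are standard Borel; $P(X)$ denotes the set of probability measures on $X$, and a Markov kernel $k\colon X\to P(Z)$ is a measurable map, written $k(E\mid x)$ for measurable $E\subseteq Z$. A machine $(Y,S,\gamma)$ consists of measurable spaces $Y$ (states) and $S$ (inputs) and a Markov kernel $\gamma\colon Y\times S\to P(Y)$. Given a measurable space $H$ and Markov kernels $\psi_H\colon Y\to P(H)$, $\kappa\colon H\to P(H\times S)$, define the kernels $\psi_{S,H'}\colon Y\to P(H\times S)$ by $\psi_{S,H'}(E\mid y)=\int_H\kappa(E\mid h)\,\psi_H(dh\mid y)$ and $\psi_S\colon Y\to P(S)$ by $\psi_S(A\mid y)=\psi_{S,H'}(H\times A\mid y)$. The triple $(H,\psi_H,\kappa)$ is a consistent Bayesian filtering interpretation of $\gamma$ if for all $y\in Y$ and all measurable $C\subseteq H$, $A\subseteq S$, $B\subseteq Y$: $$\int_{C\times A}\gamma(B\mid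 y,s)\,\psi_{S,H'}(dh',ds\mid y)=\int_A\int_B\psi_H(C\mid y')\,\gamma(dy'\mid y,s)\,\psi_S(ds\mid y).$$ *)

theory Defs
  imports "HOL-Probability.Probability"
begin

text \<open>Standard Borel space: measurably isomorphic to a Borel subset of the real line
  (Kuratowski's characterisation of standard Borel spaces).\<close>
definition standard_borel :: "'a measure \<Rightarrow> bool" where
  "standard_borel M \<longleftrightarrow>
     (\<exists>B \<in> sets (borel :: real measure). \<exists>f g.
        f \<in> M \<rightarrow>\<^sub>M restrict_space borel B \<and> g \<in> restrict_space borel B \<rightarrow>\<^sub>M M \<and>
        (\<forall>x \<in> space M. g (f x) = x) \<and> (\<forall>r \<in> B. f (g r) = r))"

definition markov_kernel :: "'a measure \<Rightarrow> 'b measure \<Rightarrow> ('a \<Rightarrow> 'b measure) \<Rightarrow> bool" where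
  "markov_kernel X Z k \<longleftrightarrow> k \<in> X \<rightarrow>\<^sub>M prob_algebra Z"

definition psi_SH' :: "('y \<Rightarrow> 'h measure) \<Rightarrow> ('h \<Rightarrow> ('h \<times> 's) measure) \<Rightarrow> 'y \<Rightarrow> ('h \<times> 's) measure" where
  "psi_SH' \<psi>H \<kappa> y = \<psi>H y \<bind> \<kappa>"

definition psi_S :: "'s measure \<Rightarrow> ('y \<Rightarrow> 'h measure) \<Rightarrow> ('h \<Rightarrow> ('h \<times> 's) measure) \<Rightarrow> 'y \<Rightarrow> 's measure" where
  "psi_S S \<psi>H \<kappa> y = distr (psi_SH' \<psi>H \<kappa> y) S snd"

definition consistent_BFI ::
  "'y measure \<Rightarrow> 's measure \<Rightarrow> ('y \<times> 's \<Rightarrow> 'y measure) \<Rightarrow> 'h measure \<Rightarrow>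
   ('y \<Rightarrow> 'h measure) \<Rightarrow> ('h \<Rightarrow> ('h \<times> 's) measure) \<Rightarrow> bool" where
  "consistent_BFI Y S \<gamma> H \<psi>H \<kappa> \<longleftrightarrow>
    (\<forall>y \<in> space Y. \<forall>C \<in> sets H. \<forall>A \<in> sets S. \<forall>B \<in> sets Y.
      (\<integral>p \<in> C \<times> A. measure (\<gamma> (y, snd p)) B \<partial>(psi_SH' \<psi>H \<kappa> y)) =
      (\<integral>s \<in> A. (\<integral>y' \<in> B. measure (\<psi>H y') C \<partial>(\<gamma> (y, s))) \<partial>(psi_S S \<psi>H \<kappa> y)))"

end

theory Submission
  imports Defs
begin

lemma key:
  fixes Y :: "'y measure" and S :: "'s measure" and H :: "'h measure"
    and \<gamma> :: "'y \<times> 's \<Rightarrow> 'y measure" and f :: "'y \<times> 's \<Rightarrow> 'y"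
    and \<psi>H :: "'y \<Rightarrow> 'h measure" and \<kappa> :: "'h \<Rightarrow> ('h \<times> 's) measure"
  assumes f: "f \<in> Y \<Otimes>\<^sub>M S \<rightarrow>\<^sub>M Y"
    and g: "\<forall>y \<in> space Y. \<forall>s \<in> space S. \<gamma> (y, s) = return Y (f (y, s))"
    and psi: "\<psi>H \<in> Y \<rightarrow>\<^sub>M prob_algebra H"
    and kap: "\<kappa> \<in> H \<rightarrow>\<^sub>M prob_algebra (H \<Otimes>\<^sub>M S)"
    and y: "y \<in> space Y" and C: "C \<in> sets H" and A: "A \<in> sets S" and B: "B \<in> sets Y"
  defines "A' \<equiv> {s \<in> A. f (y, s) \<in> B}"
  shows "A' \<in> sets S"
    and "(\<integral>p \<in> C \<times> A. measure (\<gamma> (y, snd p)) B \<partial>(psi_SH' \<psi>H \<kappa> y)) =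
         measure (psi_SH' \<psi>H \<kappa> y) (C \<times> A')"
    and "(\<integral>s \<in> A. (\<integral>y' \<in> B. measure (\<psi>H y') C \<partial>(\<gamma> (y, s))) \<partial>(psi_S S \<psi>H \<kappa> y))
         = (\<integral>s \<in> A'. measure (\<psi>H (f (y, s))) C \<partial>(psi_S S \<psi>H \<kappa> y))"
proof -
  have fy: "(\<lambda>s. f (y, s)) \<in> S \<rightarrow>\<^sub>M Y" using f y by measurable
  have A'eq: "A' = A \<inter> ((\<lambda>s. f (y, s)) -` B \<inter> space S)"
    using sets.sets_into_space[OF A] unfolding A'_def by auto
  show A': "A' \<in> sets S" unfolding A'eq using fy A B by (auto intro!: sets.Int measurable_sets)
  have psiy: "\<psi>H y \<in> space (prob_algebra H)" using measurable_space[OF psi y] .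
  have setsP: "sets (psi_SH' \<psi>H \<kappa> y) = sets (H \<Otimes>\<^sub>M S)"
    unfolding psi_SH'_def by (rule sets_bind'[OF psiy kap])
  hence spP: "space (psi_SH' \<psi>H \<kappa> y) = space (H \<Otimes>\<^sub>M S)" by (rule sets_eq_imp_space_eq)
  interpret P: prob_space "psi_SH' \<psi>H \<kappa> y"
    unfolding psi_SH'_def by (rule prob_space_bind'[OF psiy kap])
  have "(\<integral>p \<in> C \<times> A. measure (\<gamma> (y, snd p)) B \<partial>(psi_SH' \<psi>H \<kappa> y)) =
        (\<integral>p. indicator (C \<times> A') p \<partial>(psi_SH' \<psi>H \<kappa> y))"
    unfolding set_lebesgue_integral_def
  proof (rule Bochner_Integration.integral_cong[OF refl])
    fix p assume "p \<in> space (psi_SH' \<psi>H \<kappa> y)"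
    then obtain h s where p: "p = (h, s)" "s \<in> space S" by (auto simp: spP space_pair_measure)
    show "indicator (C \<times> A) p *\<^sub>R measure (\<gamma> (y, snd p)) B = indicator (C \<times> A') p"
      using p g y B by (auto simp: measure_return indicator_def A'_def)
  qed
  also have "\<dots> = measure (psi_SH' \<psi>H \<kappa> y) (C \<times> A')"
    using C A' setsP sets.sets_into_space[of "C \<times> A'" "psi_SH' \<psi>H \<kappa> y"]
    by (simp add: Int_absorb2)
  finally show "(\<integral>p \<in> C \<times> A. measure (\<gamma> (y, snd p)) B \<partial>(psi_SH' \<psi>H \<kappa> y)) =
         measure (psi_SH' \<psi>H \<kappa> y) (C \<times> A')" .
  have spQ: "space (psi_S S \<psi>H \<kappa> y) = space S" unfolding psi_S_def by simp
  have mC: "(\<lambda>y'. measure (\<psi>H y') C) \<in> borel_measurable Y"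
    using psi C by measurable
  show "(\<integral>s \<in> A. (\<integral>y' \<in> B. measure (\<psi>H y') C \<partial>(\<gamma> (y, s))) \<partial>(psi_S S \<psi>H \<kappa> y))
         = (\<integral>s \<in> A'. measure (\<psi>H (f (y, s))) C \<partial>(psi_S S \<psi>H \<kappa> y))"
    unfolding set_lebesgue_integral_def
  proof (rule Bochner_Integration.integral_cong[OF refl])
    fix s assume s: "s \<in> space (psi_S S \<psi>H \<kappa> y)"
    hence s: "s \<in> space S" by (simp add: spQ)
    have fs: "f (y, s) \<in> space Y" using measurable_space[OF f, of "(y,s)"] y s by (simp add: space_pair_measure)
    have "(\<integral>y'. indicator B y' *\<^sub>R measure (\<psi>H y') C \<partial>(\<gamma> (y, s))) = indicator B (f (y, s)) *\<^sub>R measure (\<psi>H (f (y, s))) C"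
      unfolding g[rule_format, OF y s]
      using integral_return[OF fs, of "\<lambda>y'. indicator B y' *\<^sub>R measure (\<psi>H y') C"] mC B
      by simp
    then show "indicator A s *\<^sub>R (\<integral>y'. indicator B y' *\<^sub>R measure (\<psi>H y') C \<partial>(\<gamma> (y, s))) =
          indicator A' s *\<^sub>R measure (\<psi>H (f (y, s))) C"
      by (simp add: indicator_def A'_def)
  qed
qed

theorem mainTheorem1:
  fixes Y :: "'y measure" and S :: "'s measure" and H :: "'h measure"
    and \<gamma> :: "'y \<times> 's \<Rightarrow> 'y measure" and f :: "'y \<times> 's \<Rightarrow> 'y"
    and \<psi>H :: "'y \<Rightarrow> 'h measure" and \<kappa> :: "'h \<Rightarrow> ('h \<times> 's) measure"
  assumes "standard_borel Y" and "standard_borel S" and "standard_borel H"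
    and "markov_kernel (Y \<Otimes>\<^sub>M S) Y \<gamma>"
    and "f \<in> Y \<Otimes>\<^sub>M S \<rightarrow>\<^sub>M Y"
    and "\<forall>y \<in> space Y. \<forall>s \<in> space S. \<gamma> (y, s) = return Y (f (y, s))"
    and "markov_kernel Y H \<psi>H"
    and "markov_kernel H (H \<Otimes>\<^sub>M S) \<kappa>"
  shows "consistent_BFI Y S \<gamma> H \<psi>H \<kappa> \<longleftrightarrow>
    (\<forall>y \<in> space Y. \<forall>C \<in> sets H. \<forall>A \<in> sets S.
       measure (psi_SH' \<psi>H \<kappa> y) (C \<times> A) =
       (\<integral>s \<in> A. measure (\<psi>H (f (y, s))) C \<partial>(psi_S S \<psi>H \<kappa> y)))"
proof -
  note K = key[OF assms(5,6) assms(7)[unfolded markov_kernel_def] assms(8)[unfolded markov_kernel_def]]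
  show ?thesis
  proof
    assume c: "consistent_BFI Y S \<gamma> H \<psi>H \<kappa>"
    show "\<forall>y \<in> space Y. \<forall>C \<in> sets H. \<forall>A \<in> sets S.
       measure (psi_SH' \<psi>H \<kappa> y) (C \<times> A) =
       (\<integral>s \<in> A. measure (\<psi>H (f (y, s))) C \<partial>(psi_S S \<psi>H \<kappa> y))"
    proof (intro ballI)
      fix y C A assume y: "y \<in> space Y" and C: "C \<in> sets H" and A: "A \<in> sets S"
      have e: "{s \<in> A. f (y, s) \<in> space Y} = A"
        using sets.sets_into_space[OF A] measurable_space[OF assms(5)] y
        by (auto simp: space_pair_measure)
      have B: "space Y \<in> sets Y" by simp
      from c y C A B have "(\<integral>p \<in> C \<times> A. measure (\<gamma> (y, snd p)) (space Y) \<partial>(psi_SH' \<psi>H \<kappa> y)) =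
      (\<integral>s \<in> A. (\<integral>y' \<in> space Y. measure (\<psi>H y') C \<partial>(\<gamma> (y, s))) \<partial>(psi_S S \<psi>H \<kappa> y))"
        unfolding consistent_BFI_def by blast
      then show "measure (psi_SH' \<psi>H \<kappa> y) (C \<times> A) =
       (\<integral>s \<in> A. measure (\<psi>H (f (y, s))) C \<partial>(psi_S S \<psi>H \<kappa> y))"
        using K(2,3)[OF y C A B] by (simp add: e)
    qed
  next
    assume h: "\<forall>y \<in> space Y. \<forall>C \<in> sets H. \<forall>A \<in> sets S.
       measure (psi_SH' \<psi>H \<kappa> y) (C \<times> A) =
       (\<integral>s \<in> A. measure (\<psi>H (f (y, s))) C \<partial>(psi_S S \<psi>H \<kappa> y))"
    show "consistent_BFI Y S \<gamma> H \<psi>H \<kappa>"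
      unfolding consistent_BFI_def
    proof (intro ballI)
      fix y C A B assume y: "y \<in> space Y" and C: "C \<in> sets H" and A: "A \<in> sets S" and B: "B \<in> sets Y"
      show "(\<integral>p \<in> C \<times> A. measure (\<gamma> (y, snd p)) B \<partial>(psi_SH' \<psi>H \<kappa> y)) =
      (\<integral>s \<in> A. (\<integral>y' \<in> B. measure (\<psi>H y') C \<partial>(\<gamma> (y, s))) \<partial>(psi_S S \<psi>H \<kappa> y))"
        using K(2,3)[OF y C A B] h K(1)[OF y C A B] y C by auto
    qed
  qed
qed

end
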